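(* Let $p$ be a prime and $r\ge2$ even. Let $(w_1,w_2)$ be a sequence in $U(p^r)$ such that $(f_{p^r,p}(w_1),f_{p^r,p}(w_2))$ is not a $Q_p$-weighted zero-sum sequence, and let $u\in U(p^r)$. Then the sequence $(uw_1,uw_2,pw_1,pw_2)$ in $\mathbb Z_{p^r}$ has no $S(p^r)^*$-weighted zero-sum subsequence.
   Context: $\mathbb Z_m=\mathbb Z/m\mathbb Z$, $U(m)$ its group of units, $S(m)=\{x^2:x\in\mathbb Z_m\}$, $S(m)^*=S(m)\setminus\{0\}$; for a prime $p$, $Q_p=\{x^2:x\in U(p)\}$. For $m\mid n$, $f_{n,m}:\mathbb Z_n\to\mathbb Z_m$ is the natural map. For $A\subseteq\mathbb Z_m$, a sequence $(y_1,\dots,y_k)$ ($k\ge1$) is an $A$-weighted zero-sum sequence if there exist $a_i\in A$ with $\sum a_iy_i=0$; a sequence has an $A$-weighted zero-sum subsequence if some nonempty subsequence is one. *)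

theory Defs
  imports "HOL-Number_Theory.Number_Theory"
begin

text \<open>Z_m is represented by the canonical residues {0..<m} of type int;
  the natural map f_{n,m} is x \<mapsto> x mod m.\<close>

definition Zm :: "int \<Rightarrow> int set" where
  "Zm m = {0..<m}"

definition units_mod :: "int \<Rightarrow> int set" where
  "units_mod m = {x \<in> Zm m. coprime x m}"

definition squares_mod :: "int \<Rightarrow> int set" where
  "squares_mod m = {(x^2) mod m | x. x \<in> Zm m}"

definition squares_star :: "int \<Rightarrow> int set" where
  "squares_star m = squares_mod m - {0}"

definition Qp :: "int \<Rightarrow> int set" where
  "Qp p = {(x^2) mod p | x. x \<in> units_mod p}"

definition weighted_zero_sum :: "int \<Rightarrow> int set \<Rightarrow> int list \<Rightarrow> bool" where
  "weighted_zero_sum m A ys \<longleftrightarrow> ys \<noteq> [] \<and>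
     (\<exists>a. (\<forall>i<length ys. a i \<in> A) \<and> (\<Sum>i<length ys. a i * ys ! i) mod m = 0)"

definition has_weighted_zero_sum_subseq :: "int \<Rightarrow> int set \<Rightarrow> int list \<Rightarrow> bool" where
  "has_weighted_zero_sum_subseq m A ys \<longleftrightarrow>
     (\<exists>I. I \<subseteq> {..<length ys} \<and> I \<noteq> {} \<and> weighted_zero_sum m A (nths ys I))"

end

theory Submission
  imports Defs
begin

definition vf :: "int \<Rightarrow> nat \<Rightarrow> int \<Rightarrow> nat \<Rightarrow> bool" where
  "vf p r X e \<longleftrightarrow> e < r \<and> (\<exists>g t. coprime g p \<and> X = p^e*g + p^r*t)"

lemma vf_not_dvd:
  assumes "prime p" "vf p r X e" shows "\<not> p^r dvd X"
proof
  assume d: "p^r dvd X"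
  from assms(2) obtain g t where e: "e < r" "coprime g p" "X = p^e*g + p^r*t"
    unfolding vf_def by blast
  have "p^r dvd p^e*g" using d e(3)
    by (metis add_diff_cancel_right' dvd_diff dvd_triv_left)
  moreover have "p^r = p^e * p^(r-e)" using e(1) by (simp add: power_add[symmetric])
  ultimately have "p^(r-e) dvd g" using assms(1)
    by (metis dvd_mult_cancel_left not_prime_0 power_not_zero)
  moreover have "p dvd p^(r-e)" using e(1) by (simp add: dvd_power)
  ultimately have "p dvd g" by (meson dvd_trans)
  with e(2) assms(1) show False
    by (meson coprime_common_divisor dvd_refl not_prime_unit)
qed

lemma vf_add:
  assumes "prime p" "e < f" "vf p r X e" "vf p r Y f" shows "vf p r (X+Y) e"
proof -
  from assms(3) obtain g t where a: "e < r" "coprime g p" "X = p^e*g + p^r*t"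
    unfolding vf_def by blast
  from assms(4) obtain h s where b: "f < r" "coprime h p" "Y = p^f*h + p^r*s"
    unfolding vf_def by blast
  have pf: "p^f = p^e * p^(f-e)" using assms(2) by (simp add: power_add[symmetric])
  have "X + Y = p^e*(g + p^(f-e)*h) + p^r*(t+s)" using a(3) b(3) pf
    by (simp add: algebra_simps)
  moreover have "coprime (g + p^(f-e)*h) p"
  proof -
    have "\<not> p dvd g" using a(2) assms(1)
      by (meson coprime_common_divisor dvd_refl not_prime_unit)
    moreover have "p dvd p^(f-e)*h" using assms(2) by (simp add: dvd_power)
    ultimately have "\<not> p dvd (g + p^(f-e)*h)"
      by (metis dvd_add_left_iff)
    thus ?thesis using assms(1) by (simp add: prime_imp_coprime coprime_commute)
  qed
  ultimately show ?thesis using a(1) unfolding vf_def by blast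
qed

lemma vf_mult:
  assumes "coprime c p" "vf p r X e" shows "vf p r (c*X) e"
proof -
  from assms(2) obtain g t where a: "e < r" "coprime g p" "X = p^e*g + p^r*t"
    unfolding vf_def by blast
  have "c*X = p^e*(c*g) + p^r*(c*t)" using a(3) by (simp add: algebra_simps)
  moreover have "coprime (c*g) p" using a(2) assms(1) by simp
  ultimately show ?thesis using a(1) unfolding vf_def by blast
qed

lemma vf_p:
  assumes "vf p r X e" "e+1 < r" shows "vf p r (p*X) (e+1)"
proof -
  from assms(1) obtain g t where a: "e < r" "coprime g p" "X = p^e*g + p^r*t"
    unfolding vf_def by blast
  have "p*X = p^(e+1)*g + p^r*(p*t)" using a(3) by (simp add: algebra_simps)
  thus ?thesis using a(2) assms(2) unfolding vf_def by blast
qed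

lemma sq_form:
  assumes "prime p" "b \<in> squares_star (p^r)"
  shows "\<exists>k y t. 2*k < r \<and> coprime y p \<and> b = p^(2*k)*y^2 + p^r*t"
proof -
  from assms(2) obtain x where x: "b = x^2 mod p^r" "b \<noteq> 0"
    unfolding squares_star_def squares_mod_def by blast
  have "x \<noteq> 0" using x by auto
  moreover have "\<not> is_unit p" using assms(1) not_prime_unit by blast
  ultimately obtain y where y: "x = p ^ multiplicity p x * y" "\<not> p dvd y"
    using multiplicity_decompose' by blast
  define k where "k = multiplicity p x"
  have x2: "x^2 = p^(2*k)*y^2" using y(1) unfolding k_def
    by (metis mult.commute power_mult power_mult_distrib)
  have "2*k < r"
  proof (rule ccontr)
    assume "\<not> 2*k < r"
    hence "p^r dvd p^(2*k)" by (simp add: le_imp_power_dvd)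
    hence "p^r dvd x^2" using x2 by simp
    hence "b = 0" using x(1) by simp
    thus False using x(2) by simp
  qed
  moreover have "coprime y p" using y(2) assms(1)
    by (simp add: prime_imp_coprime coprime_commute)
  moreover have "b = p^(2*k)*y^2 + p^r*(-(x^2 div p^r))"
    using x(1) x2 by (simp add: mod_div_mult_eq[symmetric] algebra_simps minus_div_mult_eq_mod[symmetric])
  ultimately show ?thesis by blast
qed


lemma single_term:
  assumes "prime p" "b \<in> squares_star (p^r)" "coprime w p"
  shows "\<exists>k. 2*k < r \<and> vf p r (b*w) (2*k)"
proof -
  obtain k y t where a: "2*k < r" "coprime y p" "b = p^(2*k)*y^2 + p^r*t"
    using sq_form[OF assms(1,2)] by blast
  have "b*w = p^(2*k)*(y^2*w) + p^r*(t*w)" using a(3) by (simp add: algebra_simps)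
  moreover have "coprime (y^2*w) p" using a(2) assms(3) by simp
  ultimately show ?thesis using a(1) unfolding vf_def by blast
qed

lemma qp_mem:
  assumes "prime p" "coprime y p" shows "y^2 mod p \<in> Qp p"
proof -
  have p0: "p > 0" using assms(1) prime_gt_0_int by blast
  have "\<not> p dvd y" using assms
    by (meson coprime_common_divisor dvd_refl not_prime_unit)
  hence "\<not> p dvd (y mod p)" by (simp add: dvd_mod_iff)
  hence "coprime (y mod p) p" using assms(1) by (simp add: prime_imp_coprime coprime_commute)
  moreover have "y mod p \<in> Zm p" unfolding Zm_def using p0 by simp
  ultimately have "y mod p \<in> units_mod p" unfolding units_mod_def by simp
  moreover have "(y mod p)^2 mod p = y^2 mod p" by (simp add: power_mod)
  ultimately show ?thesis unfolding Qp_def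
    apply (intro CollectI exI[where x="y mod p"]) by simp
qed

lemma pair_term:
  assumes "prime p" "even r"
    and H: "\<not> weighted_zero_sum p (Qp p) [w1 mod p, w2 mod p]"
    and c1: "coprime w1 p" and c2: "coprime w2 p"
    and b1: "b1 = 0 \<or> b1 \<in> squares_star (p^r)"
    and b2: "b2 = 0 \<or> b2 \<in> squares_star (p^r)"
    and nz: "b1 \<noteq> 0 \<or> b2 \<noteq> 0"
  shows "\<exists>k. 2*k < r \<and> vf p r (b1*w1 + b2*w2) (2*k)"
proof (cases "b1 = 0")
  case True
  hence "b2 \<in> squares_star (p^r)" using b2 nz by auto
  thus ?thesis using single_term[OF assms(1) _ c2] True by simp
next
  case F1: False
  hence s1: "b1 \<in> squares_star (p^r)" using b1 by auto
  show ?thesis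
  proof (cases "b2 = 0")
    case True
    thus ?thesis using single_term[OF assms(1) s1 c1] by simp
  next
    case False
    hence s2: "b2 \<in> squares_star (p^r)" using b2 by auto
    obtain k1 y1 t1 where a: "2*k1 < r" "coprime y1 p" "b1 = p^(2*k1)*y1^2 + p^r*t1"
      using sq_form[OF assms(1) s1] by blast
    obtain k2 y2 t2 where b: "2*k2 < r" "coprime y2 p" "b2 = p^(2*k2)*y2^2 + p^r*t2"
      using sq_form[OF assms(1) s2] by blast
    have v1: "vf p r (b1*w1) (2*k1)"
      using a c1 unfolding vf_def
      by (intro conjI exI[of _ "y1^2*w1"] exI[of _ "t1*w1"]) (auto simp: algebra_simps)
    have v2: "vf p r (b2*w2) (2*k2)"
      using b c2 unfolding vf_def
      by (intro conjI exI[of _ "y2^2*w2"] exI[of _ "t2*w2"]) (auto simp: algebra_simps)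
    consider "k1 < k2" | "k2 < k1" | "k1 = k2" by linarith
    thus ?thesis
    proof cases
      case 1
      thus ?thesis using vf_add[OF assms(1) _ v1 v2] a(1) by auto
    next
      case 2
      thus ?thesis using vf_add[OF assms(1) _ v2 v1] b(1) by (auto simp: add.commute)
    next
      case 3
      have eq: "b1*w1 + b2*w2 = p^(2*k1)*(y1^2*w1 + y2^2*w2) + p^r*(t1*w1+t2*w2)"
        using a(3) b(3) 3 by (simp add: algebra_simps)
      have "\<not> p dvd (y1^2*w1 + y2^2*w2)"
      proof
        assume d: "p dvd (y1^2*w1 + y2^2*w2)"
        define a where "a = (\<lambda>i::nat. if i = 0 then y1^2 mod p else y2^2 mod p)"
        have "a 0 \<in> Qp p" "a 1 \<in> Qp p" using qp_mem[OF assms(1)] a(2) b(2)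
          unfolding a_def by auto
        moreover have "(a 0 * (w1 mod p) + a 1 * (w2 mod p)) mod p = 0"
        proof -
          have m1: "(y1^2 mod p) * (w1 mod p) mod p = y1^2*w1 mod p" by (rule mod_mult_eq)
          have m2: "(y2^2 mod p) * (w2 mod p) mod p = y2^2*w2 mod p" by (rule mod_mult_eq)
          have "(a 0 * (w1 mod p) + a 1 * (w2 mod p)) mod p = (y1^2*w1 + y2^2*w2) mod p"
            unfolding a_def using mod_add_cong[OF m1 m2] by simp
          thus ?thesis using d by simp
        qed
        ultimately have "weighted_zero_sum p (Qp p) [w1 mod p, w2 mod p]"
          unfolding weighted_zero_sum_def
          by (intro conjI exI[of _ a]) (auto simp: less_Suc_eq numeral_2_eq_2)
        thus False using H by simp
      qed
      hence "coprime (y1^2*w1 + y2^2*w2) p" using assms(1)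
        by (simp add: prime_imp_coprime coprime_commute)
      thus ?thesis using eq a(1) unfolding vf_def by blast
    qed
  qed
qed

lemma card_suc:
  "card {i\<in>I. i < Suc j} = (if (0::nat) \<in> I then 1 else 0) + card {i\<in>{k. Suc k \<in> I}. i < j}"
proof -
  have e: "{i\<in>I. i < Suc j} = (if 0\<in>I then {0} else {}) \<union> Suc ` {i\<in>{k. Suc k \<in> I}. i < j}"
    by (auto simp: image_iff less_Suc_eq_0_disj)
  have "card ((if 0\<in>I then {0} else {}) \<union> Suc ` {i\<in>{k. Suc k \<in> I}. i < j}) =
        card (if 0\<in>I then {0::nat} else {}) + card (Suc ` {i\<in>{k. Suc k \<in> I}. i < j})"
    by (rule card_Un_disjoint) auto
  also have "card (Suc ` {i\<in>{k. Suc k \<in> I}. i < j}) = card {i\<in>{k. Suc k \<in> I}. i < j}"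
    by (simp add: card_image)
  finally show ?thesis using e by simp
qed

lemma sum_nths:
  "(\<Sum>i<length (nths xs I). (f i::int) * nths xs I ! i) =
   (\<Sum>j<length xs. if j \<in> I then f (card {i\<in>I. i<j}) * xs!j else 0)"
proof (induction xs arbitrary: I f)
  case Nil
  then show ?case by simp
next
  case (Cons x xs)
  define I' where "I' = {j. Suc j \<in> I}"
  have n: "nths (x#xs) I = (if 0\<in>I then [x] else []) @ nths xs I'"
    unfolding I'_def by (simp add: nths_Cons)
  have r: "(\<Sum>j<length (x#xs). if j \<in> I then f (card {i\<in>I. i<j}) * (x#xs)!j else 0) =
     (if 0 \<in> I then f 0 * x else 0) +
     (\<Sum>j<length xs. if Suc j \<in> I then f (card {i\<in>I. i<Suc j}) * xs!j else 0)"
    unfolding length_Cons sum.lessThan_Suc_shift by (auto intro!: sum.cong)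
  have cI: "\<And>j. card {i\<in>I. i<Suc j} = (if 0\<in>I then 1 else 0) + card {i\<in>I'. i<j}"
    unfolding I'_def by (rule card_suc)
  have mem: "\<And>j. j \<in> I' \<longleftrightarrow> Suc j \<in> I" unfolding I'_def by simp
  show ?case
  proof (cases "0 \<in> I")
    case True
    have "(\<Sum>i<length (nths (x#xs) I). f i * nths (x#xs) I ! i) =
      f 0 * x + (\<Sum>i<length (nths xs I'). f (Suc i) * nths xs I' ! i)"
      using True n by (simp del: sum.lessThan_Suc add: sum.lessThan_Suc_shift)
    also have "\<dots> = f 0 * x + (\<Sum>j<length xs. if j \<in> I' then f (Suc (card {i\<in>I'. i<j})) * xs!j else 0)"
      using Cons.IH[where I=I' and f="\<lambda>i. f (Suc i)"] by simp
    also have "\<dots> = (\<Sum>j<length (x#xs). if j \<in> I then f (card {i\<in>I. i<j}) * (x#xs)!j else 0)"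
      unfolding r if_P[OF True]
    proof (intro arg_cong[where f="\<lambda>z. f 0 * x + z"] sum.cong refl)
      fix j show "(if j \<in> I' then f (Suc (card {i\<in>I'. i<j})) * xs!j else 0) =
         (if Suc j \<in> I then f (card {i\<in>I. i<Suc j}) * xs!j else 0)"
        using True by (simp only: cI mem if_True) simp
    qed
    finally show ?thesis .
  next
    case False
    have "(\<Sum>i<length (nths (x#xs) I). f i * nths (x#xs) I ! i) =
      (\<Sum>i<length (nths xs I'). f i * nths xs I' ! i)"
      using False n by simp
    also have "\<dots> = (\<Sum>j<length xs. if j \<in> I' then f (card {i\<in>I'. i<j}) * xs!j else 0)"
      using Cons.IH[where I=I' and f=f] by simp
    also have "\<dots> = (\<Sum>j<length (x#xs). if j \<in> I then f (card {i\<in>I. i<j}) * (x#xs)!j else 0)"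
      unfolding r if_not_P[OF False] add_0_left
    proof (intro sum.cong refl)
      fix j show "(if j \<in> I' then f (card {i\<in>I'. i<j}) * xs!j else 0) =
         (if Suc j \<in> I then f (card {i\<in>I. i<Suc j}) * xs!j else 0)"
        using False by (simp only: cI mem if_False) simp
    qed
    finally show ?thesis .
  qed
qed


theorem mainTheorem13:
  fixes p :: int and r :: nat and w1 w2 u :: int
  assumes "prime p" and "r \<ge> 2" and "even r"
    and "w1 \<in> units_mod (p ^ r)" and "w2 \<in> units_mod (p ^ r)"
    and "\<not> weighted_zero_sum p (Qp p) [w1 mod p, w2 mod p]"
    and "u \<in> units_mod (p ^ r)"
  shows "\<not> has_weighted_zero_sum_subseq (p ^ r) (squares_star (p ^ r))
           [(u * w1) mod p ^ r, (u * w2) mod p ^ r, (p * w1) mod p ^ r, (p * w2) mod p ^ r]"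
proof
  define m where "m = p^r"
  define S where "S = squares_star (p^r)"
  define ys where "ys = [(u * w1) mod p ^ r, (u * w2) mod p ^ r, (p * w1) mod p ^ r, (p * w2) mod p ^ r]"
  have ly: "length ys = 4" unfolding ys_def by simp
  assume H0: "has_weighted_zero_sum_subseq (p ^ r) (squares_star (p ^ r)) [(u * w1) mod p ^ r, (u * w2) mod p ^ r, (p * w1) mod p ^ r, (p * w2) mod p ^ r]"
  have "has_weighted_zero_sum_subseq m S ys" using H0 unfolding ys_def m_def S_def .
  then obtain I where I: "I \<subseteq> {..<length ys}" "I \<noteq> {}" and W: "weighted_zero_sum m S (nths ys I)"
    unfolding has_weighted_zero_sum_subseq_def by metis
  from W obtain a where a: "\<forall>i<length (nths ys I). a i \<in> S"
    and z: "(\<Sum>i<length (nths ys I). a i * nths ys I ! i) mod m = 0"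
    unfolding weighted_zero_sum_def by metis
  define b where "b j = (if j \<in> I then a (card {i\<in>I. i<j}) else 0)" for j
  have "(\<Sum>j<length ys. if j\<in>I then a (card {i\<in>I. i<j}) * ys!j else 0) = (\<Sum>j<length ys. b j * ys!j)"
    by (rule sum.cong) (auto simp: b_def)
  hence zb: "(\<Sum>j<4. b j * ys!j) mod m = 0" using z sum_nths[of a ys I] ly by simp
  have bI: "b j \<in> S" if "j < 4" "j \<in> I" for j
  proof -
    note True = that(2)
    have "{i\<in>I. i<j} \<subset> {i. i < length ys \<and> i \<in> I}" using True that ly by auto
    hence "card {i\<in>I. i<j} < card {i. i < length ys \<and> i \<in> I}"
      by (intro psubset_card_mono) auto
    hence "card {i\<in>I. i<j} < length (nths ys I)" by (simp add: length_nths)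
    thus ?thesis using a True by (simp add: b_def)
  qed
  have bS: "b j = 0 \<or> b j \<in> S" if "j < 4" for j
    using bI[OF that] by (cases "j \<in> I") (auto simp: b_def)
  have bnz: "\<exists>j<4. b j \<noteq> 0"
  proof -
    obtain j where j: "j \<in> I" using I(2) by blast
    hence j4: "j < 4" using I(1) ly by auto
    hence "b j \<in> S" using bI j by blast
    hence "b j \<noteq> 0" unfolding S_def squares_star_def by auto
    thus ?thesis using j4 by blast
  qed
  define X where "X = b 0 * w1 + b 1 * w2"
  define Y where "Y = b 2 * w1 + b 3 * w2"
  have s4: "(\<Sum>j<4. b j * ys!j) = b 0 * ys!0 + b 1 * ys!1 + b 2 * ys!2 + b 3 * ys!3"
    by (simp add: eval_nat_numeral)
  have md: "z mod m = z - m * (z div m)" for z :: int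
    by (metis minus_div_mult_eq_mod mult.commute)
  have "(\<Sum>j<4. b j * ys!j) = u*X + p*Y + m * (-(b 0 * ((u*w1) div m) + b 1 * ((u*w2) div m)
      + b 2 * ((p*w1) div m) + b 3 * ((p*w2) div m)))"
  proof -
    have "(\<Sum>j<4. b j * ys!j) = b 0 * ((u*w1) mod m) + b 1 * ((u*w2) mod m) + b 2 * ((p*w1) mod m) + b 3 * ((p*w2) mod m)"
      unfolding s4 by (simp add: ys_def m_def)
    also have "\<dots> = u*X + p*Y + m * (-(b 0 * ((u*w1) div m) + b 1 * ((u*w2) div m)
      + b 2 * ((p*w1) div m) + b 3 * ((p*w2) div m)))"
      unfolding md X_def Y_def by (simp add: algebra_simps)
    finally show ?thesis .
  qed
  hence "(u*X + p*Y) mod m = 0" using zb by simp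
  hence D: "p^r dvd (u*X + p*Y)" unfolding m_def by (simp add: dvd_eq_mod_eq_0)
  have r0: "r > 0" using assms(2) by simp
  have c1: "coprime w1 p" using assms(4) r0 unfolding units_mod_def by simp
  have c2: "coprime w2 p" using assms(5) r0 unfolding units_mod_def by simp
  have cu: "coprime u p" using assms(7) r0 unfolding units_mod_def by simp
  have b0: "b 0 = 0 \<or> b 0 \<in> squares_star (p^r)" using bS[of 0] S_def by simp
  have b1: "b 1 = 0 \<or> b 1 \<in> squares_star (p^r)" using bS[of 1] S_def by simp
  have b2: "b 2 = 0 \<or> b 2 \<in> squares_star (p^r)" using bS[of 2] S_def by simp
  have b3: "b 3 = 0 \<or> b 3 \<in> squares_star (p^r)" using bS[of 3] S_def by simp
  have oddlt: "2*k+1 < r" if "2*k < r" for k using that assms(3)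
    by (elim evenE) simp
  have PX: "\<exists>k. 2*k < r \<and> vf p r (u*X) (2*k)" if h01: "b 0 \<noteq> 0 \<or> b 1 \<noteq> 0"
  proof -
    obtain k where "2*k < r" "vf p r X (2*k)"
      using pair_term[OF assms(1,3,6) c1 c2 b0 b1 h01] unfolding X_def by blast
    thus ?thesis using vf_mult[OF cu] by blast
  qed
  have PY: "\<exists>k. 2*k+1 < r \<and> vf p r (p*Y) (2*k+1)" if h23: "b 2 \<noteq> 0 \<or> b 3 \<noteq> 0"
  proof -
    obtain k where "2*k < r" "vf p r Y (2*k)"
      using pair_term[OF assms(1,3,6) c1 c2 b2 b3 h23] unfolding Y_def by blast
    thus ?thesis using vf_p[of p r Y "2*k"] oddlt[of k] by auto
  qed
  show False
  proof (cases "b 0 = 0 \<and> b 1 = 0")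
    case True
    hence "b 2 \<noteq> 0 \<or> b 3 \<noteq> 0" using bnz by (auto simp: less_Suc_eq eval_nat_numeral)
    then obtain k where "vf p r (p*Y) (2*k+1)" using PY by blast
    moreover have "u*X + p*Y = p*Y" using True X_def by simp
    ultimately show False using vf_not_dvd[OF assms(1)] D by metis
  next
    case F: False
    then obtain k where k: "vf p r (u*X) (2*k)" using PX by blast
    show False
    proof (cases "b 2 = 0 \<and> b 3 = 0")
      case True
      hence "u*X + p*Y = u*X" using Y_def by simp
      thus False using vf_not_dvd[OF assms(1) k] D by metis
    next
      case False
      then obtain j where j: "vf p r (p*Y) (2*j+1)" using PY by blast
      have "vf p r (u*X + p*Y) (2*k) \<or> vf p r (p*Y + u*X) (2*j+1)"
      proof (cases "2*k < 2*j+1")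
        case True thus ?thesis using vf_add[OF assms(1) True k j] by blast
      next
        case False
        hence "2*j+1 < 2*k" by presburger
        thus ?thesis using vf_add[OF assms(1) _ j k] by blast
      qed
      thus False using vf_not_dvd[OF assms(1)] D by (metis add.commute)
    qed
  qed
qed

end
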